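(* Let $G$ be a finite group with identity $e$, and let $\mathcal{B}\subseteq\binom{G}{3}$ be the set of bases of a rank-$3$ matroid on the ground set $G$ that is invariant under left multiplication by $G$. Let $g,h,g',h'\in G$ with $e,g,h$ pairwise distinct and $e,g',h'$ pairwise distinct. If $f_{g,h}\cup f_{g',h'}\subseteq\mathcal{B}$, then $f_{g,g'}\subseteq\mathcal{B}$ or $f_{g,h'}\subseteq\mathcal{B}$, where only those of $f_{g,g'}$, $f_{g,h'}$ that are defined (i.e. $g'\ne g$, resp. $h'\neq g$) are considered; at least one of them is defined and contained in $\mathcal{B}$.
   Context: $G$ acts on $\binom{G}{3}$ by $x\cdot\{a,b,c\}=\{xa,xb,xc\}$. For $g,h\in G$ with $e,g,h$ pairwise distinct, $f_{g,h}=\{\{a,ag,ah\}\mid a\in G\}$ (a $G$-orbit, with $f_{g,h}=f_{h,g}$). A matroid on ground set $G$ is invariant if its set of bases is preserved by this action. *)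

theory Defs
  imports "HOL-Algebra.Group"
begin

definition matroid_bases :: "'a set \<Rightarrow> 'a set set \<Rightarrow> bool" where
  "matroid_bases E \<B> \<longleftrightarrow> finite E \<and> \<B> \<noteq> {} \<and> (\<forall>X\<in>\<B>. X \<subseteq> E) \<and>
     (\<forall>X\<in>\<B>. \<forall>Y\<in>\<B>. \<forall>x\<in>X - Y. \<exists>y\<in>Y - X. insert y (X - {x}) \<in> \<B>)"

definition rank3_matroid_bases :: "'a set \<Rightarrow> 'a set set \<Rightarrow> bool" where
  "rank3_matroid_bases E \<B> \<longleftrightarrow> matroid_bases E \<B> \<and> (\<forall>X\<in>\<B>. card X = 3)"

definition left_invariant :: "('a, 'b) monoid_scheme \<Rightarrow> 'a set set \<Rightarrow> bool" where
  "left_invariant G \<B> \<longleftrightarrow>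
     (\<forall>x\<in>carrier G. \<forall>X\<in>\<B>. (\<lambda>a. x \<otimes>\<^bsub>G\<^esub> a) ` X \<in> \<B>)"

definition orbit_f :: "('a, 'b) monoid_scheme \<Rightarrow> 'a \<Rightarrow> 'a \<Rightarrow> 'a set set" where
  "orbit_f G g h = {{a, a \<otimes>\<^bsub>G\<^esub> g, a \<otimes>\<^bsub>G\<^esub> h} | a. a \<in> carrier G}"

end

theory Submission
  imports Defs
begin

lemma orbit_sub:
  fixes G (structure)
  assumes "group G" "left_invariant G \<B>" "g \<in> carrier G" "x \<in> carrier G"
    and "{\<one>, g, x} \<in> \<B>"
  shows "orbit_f G g x \<subseteq> \<B>"
proof
  fix S assume "S \<in> orbit_f G g x"
  then obtain a where a: "a \<in> carrier G" "S = {a, a \<otimes> g, a \<otimes> x}"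
    unfolding orbit_f_def by blast
  have "(\<lambda>b. a \<otimes> b) ` {\<one>, g, x} \<in> \<B>"
    using assms(2,5) a(1) unfolding left_invariant_def by blast
  moreover have "(\<lambda>b. a \<otimes> b) ` {\<one>, g, x} = S"
    using a assms(1) by (simp add: group.is_monoid monoid.r_one)
  ultimately show "S \<in> \<B>" by simp
qed

lemma base_in:
  fixes G (structure)
  assumes "group G" "g \<in> carrier G" "h \<in> carrier G" "orbit_f G g h \<subseteq> \<B>"
  shows "{\<one>, g, h} \<in> \<B>"
proof -
  have "{\<one>, \<one> \<otimes> g, \<one> \<otimes> h} \<in> orbit_f G g h"
    unfolding orbit_f_def using assms(1) by (auto intro: group.is_monoid monoid.one_closed)
  then show ?thesis using assms by (simp add: group.is_monoid monoid.l_one) blast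
qed

theorem mainTheorem8:
  fixes G (structure) and \<B> :: "'a set set" and g h g' h' :: 'a
  assumes "group G" and "finite (carrier G)"
    and "rank3_matroid_bases (carrier G) \<B>"
    and "left_invariant G \<B>"
    and "g \<in> carrier G" "h \<in> carrier G" "g' \<in> carrier G" "h' \<in> carrier G"
    and "g \<noteq> \<one>" "h \<noteq> \<one>" "g \<noteq> h"
    and "g' \<noteq> \<one>" "h' \<noteq> \<one>" "g' \<noteq> h'"
    and "orbit_f G g h \<union> orbit_f G g' h' \<subseteq> \<B>"
  shows "(g' \<noteq> g \<and> orbit_f G g g' \<subseteq> \<B>) \<or> (h' \<noteq> g \<and> orbit_f G g h' \<subseteq> \<B>)"
proof -
  have X: "{\<one>, g, h} \<in> \<B>" using base_in[OF assms(1,5,6)] assms(15) by blast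
  have Y: "{\<one>, g', h'} \<in> \<B>" using base_in[OF assms(1,7,8)] assms(15) by blast
  have one: "\<one> \<in> carrier G" using assms(1) by (simp add: group.is_monoid monoid.one_closed)
  have ex: "\<forall>X\<in>\<B>. \<forall>Y\<in>\<B>. \<forall>x\<in>X - Y. \<exists>y\<in>Y - X. insert y (X - {x}) \<in> \<B>"
    using assms(3) unfolding rank3_matroid_bases_def matroid_bases_def by blast
  show ?thesis
  proof (cases "h \<in> {\<one>, g', h'}")
    case True
    then show ?thesis
    proof
      assume "h = \<one>" then show ?thesis using assms by simp
    next
      assume "h \<in> {g', h'}"
      then show ?thesis using X assms orbit_sub[OF assms(1,4,5)] by auto
    qed
  next
    case False
    then obtain y where y: "y \<in> {\<one>, g', h'} - {\<one>, g, h}"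
      "insert y ({\<one>, g, h} - {h}) \<in> \<B>"
      using ex X Y by blast
    have "{\<one>, g, h} - {h} = {\<one>, g}" using assms by auto
    then have yB: "{\<one>, g, y} \<in> \<B>" using y(2) by (simp add: insert_commute)
    from y(1) have "y = g' \<or> y = h'" by auto
    then show ?thesis
    proof
      assume "y = g'" then show ?thesis using yB y(1) orbit_sub[OF assms(1,4,5,7)] by auto
    next
      assume "y = h'" then show ?thesis using yB y(1) orbit_sub[OF assms(1,4,5,8)] by auto
    qed
  qed
qed

end
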